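(* Under the assumptions below, let $y_{\varrho h}\in Y_h$ be the unique Galerkin solution with $\varrho=h^{2\alpha}$. Then there is a constant $c>0$ independent of $h$ and $\overline{y}$ such that $$\|y_{\varrho h}-\overline{y}\|_{H_Y}\le c\begin{cases}\|\overline{y}\|_{H_Y}&\text{for }\overline{y}\in H_Y,\\ h^\alpha\|\overline{y}\|_D&\text{for }\overline{y}\in Y,\\ h^{2\alpha}\|D\overline{y}\|_{H_Y}&\text{for }\overline{y}\in Y,\ D\overline{y}\in H_Y.\end{cases}$$ Moreover, if $\overline{y}\in[H_Y,Y]_s$ for some $s\in[0,1]$, then $\|y_{\varrho h}-\overline{y}\|_{H_Y}\le c\,h^{\alpha s}\|\overline{y}\|_{[H_Y,Y]_s}$.
   Context: Abstract setting: Let $Y\subset H_Y\subset Y^*$ be a Gelfand triple of real Hilbert spaces, with duality pairing $\langle\cdot,\cdot\rangle_{Y^*,Y}$ extending the inner product of $H_Y$. Let $D:Y\to Y^*$ be bounded, linear, self-adjoint and elliptic, $\|y\|_D:=\langle Dy,y\rangle_{Y^*,Y}^{1/2}$ (an equivalent norm on $Y$). For $y\in Y$ we write "$Dy\in H_Y$" if there is $w\in H_Y$ with $\langle Dy,v\rangle_{Y^*,Y}=\langle w,v\rangle_{H_Y}$ for all $v\in Y$, and then $\|Dy\|_{H_Y}:=\|w\|_{H_Y}$. Discretization: For each discretization parameter $h\in(0,h_0]$ let $Y_h\subset Y$ be a finite-dimensional subspace, and assume there are maps $P_h:Y\to Y_h$, an exponent $\alpha>0$ and constants $c_1,c_2,c_3,c_4>0$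 independent of $h$ such that for all $y\in Y$: $\|y-P_hy\|_{H_Y}\le c_1h^\alpha\|y\|_D$ and $\|y-P_hy\|_D\le c_2\|y\|_D$; and, if in addition $Dy\in H_Y$: $\|y-P_hy\|_{H_Y}\le c_3h^{2\alpha}\|Dy\|_{H_Y}$ and $\|y-P_hy\|_D\le c_4h^\alpha\|Dy\|_{H_Y}$. Given $\overline{y}\in H_Y$ and $\varrho>0$, the Galerkin solution $y_{\varrho h}\in Y_h$ satisfies $\langle y_{\varrho h},y_h\rangle_{H_Y}+\varrho\langle Dy_{\varrho h},y_h\rangle_{Y^*,Y}=\langle\overline{y},y_h\rangle_{H_Y}$ for all $y_h\in Y_h$. $[H_Y,Y]_s$, $s\in[0,1]$, denotes the interpolation space between $H_Y$ and $Y$ (with $Y$ normed by $\|\cdot\|_D$) obtained by an exact interpolation method of exponent $s$ (e.g. the real $K$-method), with $[H_Y,Y]_0=H_Y$ and $[H_Y,Y]_1=Y$. *)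

theory Defs
  imports "HOL-Analysis.Analysis"
begin

text \<open>The pivot space H_Y is the type 'a (a real Hilbert space).
 Y is a linear subspace of 'a carrying its own Hilbert norm nY (induced by the inner
 product iY), densely and continuously embedded in H_Y (Gelfand triple Y \<subseteq> H_Y \<subseteq> Y*).
 The operator D : Y \<rightarrow> Y* is represented by its bilinear form a y v = <D y, v>_{Y*,Y}.\<close>

definition gelfand_setting ::
  "'a::{real_inner,complete_space} set \<Rightarrow> ('a \<Rightarrow> 'a \<Rightarrow> real) \<Rightarrow> ('a \<Rightarrow> 'a \<Rightarrow> real) \<Rightarrow> bool" where
  "gelfand_setting Y iY a \<longleftrightarrow>
     subspace Y \<and>
     \<comment> \<open>iY is an inner product on Y\<close>
     (\<forall>x\<in>Y. \<forall>y\<in>Y. iY x y = iY y x) \<and>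
     (\<forall>x\<in>Y. \<forall>y\<in>Y. \<forall>z\<in>Y. \<forall>r::real. iY (r *\<^sub>R x + y) z = r * iY x z + iY y z) \<and>
     (\<forall>x\<in>Y. x \<noteq> 0 \<longrightarrow> iY x x > 0) \<and>
     \<comment> \<open>Y is complete w.r.t. its norm sqrt (iY y y)\<close>
     (\<forall>X::nat \<Rightarrow> 'a. (\<forall>n. X n \<in> Y) \<and>
        (\<forall>e>0. \<exists>N. \<forall>m\<ge>N. \<forall>n\<ge>N. sqrt (iY (X m - X n) (X m - X n)) < e) \<longrightarrow>
        (\<exists>y\<in>Y. (\<lambda>n. sqrt (iY (X n - y) (X n - y))) \<longlonglongrightarrow> 0)) \<and>
     \<comment> \<open>continuous and dense embedding Y \<subseteq> H_Y\<close>
     (\<exists>C. \<forall>y\<in>Y. norm y \<le> C * sqrt (iY y y)) \<and>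
     closure Y = UNIV \<and>
     \<comment> \<open>D is linear, bounded, self-adjoint and elliptic\<close>
     (\<forall>x\<in>Y. \<forall>y\<in>Y. a x y = a y x) \<and>
     (\<forall>x\<in>Y. \<forall>y\<in>Y. \<forall>z\<in>Y. \<forall>r::real. a (r *\<^sub>R x + y) z = r * a x z + a y z) \<and>
     (\<exists>M. \<forall>x\<in>Y. \<forall>y\<in>Y. \<bar>a x y\<bar> \<le> M * sqrt (iY x x) * sqrt (iY y y)) \<and>
     (\<exists>m>0. \<forall>y\<in>Y. a y y \<ge> m * iY y y)"

definition normD :: "('a \<Rightarrow> 'a \<Rightarrow> real) \<Rightarrow> 'a \<Rightarrow> real" where
  "normD a y = sqrt (a y y)"

text \<open>"D y \<in> H_Y" with representative w (then \<parallel>D y\<parallel>_{H_Y} = norm w).\<close>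
definition D_rep :: "'a::real_inner set \<Rightarrow> ('a \<Rightarrow> 'a \<Rightarrow> real) \<Rightarrow> 'a \<Rightarrow> 'a \<Rightarrow> bool" where
  "D_rep Y a y w \<longleftrightarrow> y \<in> Y \<and> (\<forall>v\<in>Y. a y v = inner w v)"

definition discretization ::
  "'a::real_inner set \<Rightarrow> ('a \<Rightarrow> 'a \<Rightarrow> real) \<Rightarrow> real \<Rightarrow> (real \<Rightarrow> 'a set) \<Rightarrow> (real \<Rightarrow> 'a \<Rightarrow> 'a)
     \<Rightarrow> real \<Rightarrow> bool" where
  "discretization Y a h0 Yh P \<alpha> \<longleftrightarrow> h0 > 0 \<and> \<alpha> > 0 \<and>
     (\<forall>h\<in>{0<..h0}. subspace (Yh h) \<and> Yh h \<subseteq> Y \<and> (\<exists>B. finite B \<and> Yh h = span B)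
        \<and> (\<forall>y\<in>Y. P h y \<in> Yh h)) \<and>
     (\<exists>c1>0. \<exists>c2>0. \<exists>c3>0. \<exists>c4>0. \<forall>h\<in>{0<..h0}. \<forall>y\<in>Y.
        norm (y - P h y) \<le> c1 * h powr \<alpha> * normD a y \<and>
        normD a (y - P h y) \<le> c2 * normD a y \<and>
        (\<forall>w. D_rep Y a y w \<longrightarrow>
           norm (y - P h y) \<le> c3 * h powr (2 * \<alpha>) * norm w \<and>
           normD a (y - P h y) \<le> c4 * h powr \<alpha> * norm w))"

definition galerkin_sol ::
  "('a \<Rightarrow> 'a \<Rightarrow> real) \<Rightarrow> 'a::real_inner set \<Rightarrow> real \<Rightarrow> 'a \<Rightarrow> 'a \<Rightarrow> bool" where
  "galerkin_sol a Yh \<rho> ybar y \<longleftrightarrow> y \<in> Yh \<and>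
     (\<forall>v\<in>Yh. inner y v + \<rho> * a y v = inner ybar v)"

definition Kfun :: "'a::real_inner set \<Rightarrow> ('a \<Rightarrow> 'a \<Rightarrow> real) \<Rightarrow> real \<Rightarrow> 'a \<Rightarrow> real" where
  "Kfun Y a t y = Inf {norm y0 + t * normD a y1 | y0 y1. y1 \<in> Y \<and> y = y0 + y1}"

text \<open>Real K-method (q = 2), normalized so that it is an exact interpolation
 method of exponent s (the normalization makes [H,H]_s = H isometrically).\<close>
definition Kint :: "'a::real_inner set \<Rightarrow> ('a \<Rightarrow> 'a \<Rightarrow> real) \<Rightarrow> real \<Rightarrow> 'a \<Rightarrow> ennreal" where
  "Kint Y a s y = (\<integral>\<^sup>+ t. indicator {0<..} t *
       ennreal ((t powr (- s) * Kfun Y a t y)\<^sup>2 / t) \<partial>lborel)"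

definition interp_space :: "'a::real_inner set \<Rightarrow> ('a \<Rightarrow> 'a \<Rightarrow> real) \<Rightarrow> real \<Rightarrow> 'a set" where
  "interp_space Y a s =
     (if s = 0 then UNIV else if s = 1 then Y else {y. Kint Y a s y < \<infinity>})"

definition interp_norm :: "'a::real_inner set \<Rightarrow> ('a \<Rightarrow> 'a \<Rightarrow> real) \<Rightarrow> real \<Rightarrow> 'a \<Rightarrow> real" where
  "interp_norm Y a s y =
     (if s = 0 then norm y else if s = 1 then normD a y
      else sqrt (2 * s * (1 - s) * enn2real (Kint Y a s y)))"

end

theory Submission imports Defs begin

context
  fixes Y :: "'a::real_inner set" and a :: "'a \<Rightarrow> 'a \<Rightarrow> real"
  assumes zY: "0 \<in> Y" and apos: "\<And>y. y \<in> Y \<Longrightarrow> a y y \<ge> 0"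
begin

lemma S_ne: "{norm y0 + t * normD a y1 | y0 y1. y1 \<in> Y \<and> x = y0 + y1} \<noteq> {}"
  using zY by force

lemma S_bdd: "t \<ge> 0 \<Longrightarrow> bdd_below {norm y0 + t * normD a y1 | y0 y1. y1 \<in> Y \<and> x = y0 + y1}"
  unfolding bdd_below_def normD_def using apos
  by (intro exI[of _ 0]) (auto intro!: add_nonneg_nonneg mult_nonneg_nonneg)

lemma K_upper: "t \<ge> 0 \<Longrightarrow> y1 \<in> Y \<Longrightarrow> x = y0 + y1 \<Longrightarrow> Kfun Y a t x \<le> norm y0 + t * normD a y1"
  unfolding Kfun_def by (rule cInf_lower[OF _ S_bdd]) auto

lemma K_nonneg: "t \<ge> 0 \<Longrightarrow> Kfun Y a t x \<ge> 0"
  unfolding Kfun_def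
  by (rule cInf_greatest[OF S_ne]) (auto simp: normD_def intro!: add_nonneg_nonneg mult_nonneg_nonneg apos)

lemma K_mono: assumes "0 \<le> \<tau>" "\<tau> \<le> t" shows "Kfun Y a \<tau> x \<le> Kfun Y a t x"
  unfolding Kfun_def
proof (intro cInf_greatest[OF S_ne])
  fix z assume "z \<in> {norm y0 + t * normD a y1 | y0 y1. y1 \<in> Y \<and> x = y0 + y1}"
  then obtain y0 y1 where z: "z = norm y0 + t * normD a y1" "y1 \<in> Y" "x = y0 + y1" by auto
  have "Kfun Y a \<tau> x \<le> norm y0 + \<tau> * normD a y1" using K_upper assms z by auto
  also have "\<dots> \<le> z" using z assms apos[of y1] unfolding normD_def by (auto intro!: mult_right_mono)
  finally show "Inf {norm y0 + \<tau> * normD a y1 | y0 y1. y1 \<in> Y \<and> x = y0 + y1} \<le> z" unfolding Kfun_def .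
qed

lemma K_scale: assumes "0 < t" "t \<le> \<tau>" shows "(t / \<tau>) * Kfun Y a \<tau> x \<le> Kfun Y a t x"
  unfolding Kfun_def[of _ _ t]
proof (intro cInf_greatest[OF S_ne])
  fix z assume "z \<in> {norm y0 + t * normD a y1 | y0 y1. y1 \<in> Y \<and> x = y0 + y1}"
  then obtain y0 y1 where z: "z = norm y0 + t * normD a y1" "y1 \<in> Y" "x = y0 + y1" by auto
  have "Kfun Y a \<tau> x \<le> norm y0 + \<tau> * normD a y1" using K_upper assms z by auto
  hence "(t / \<tau>) * Kfun Y a \<tau> x \<le> (t / \<tau>) * (norm y0 + \<tau> * normD a y1)"
    using assms by (intro mult_left_mono) auto
  also have "\<dots> = (t / \<tau>) * norm y0 + t * normD a y1" using assms by (simp add: field_simps)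
  also have "\<dots> \<le> z" proof -
    have "(t / \<tau>) * norm y0 \<le> 1 * norm y0" using assms by (intro mult_right_mono) auto
    thus ?thesis using z by simp
  qed
  finally show "(t / \<tau>) * Kfun Y a \<tau> x \<le> z" .
qed

lemma Kint_lower:
  assumes s: "0 < s" "s < 1" and tau: "\<tau> > 0" and fin: "Kint Y a s x < \<infinity>"
  shows "(Kfun Y a \<tau> x)\<^sup>2 * \<tau> powr (- 2 * s) \<le> 2 * (interp_norm Y a s x)\<^sup>2"
proof -
  define K where "K = Kfun Y a \<tau> x"
  define I where "I = enn2real (Kint Y a s x)"
  have K0: "K \<ge> 0" unfolding K_def using tau by (intro K_nonneg) auto
  have I0: "I \<ge> 0" unfolding I_def by simp
  have in2: "(interp_norm Y a s x)\<^sup>2 = 2 * s * (1 - s) * I"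
    unfolding interp_norm_def I_def using s by (simp add: I0[unfolded I_def])
  have fact1: "r \<le> I" if "ennreal r \<le> Kint Y a s x" "r \<ge> 0" for r
  proof -
    have "enn2real (ennreal r) \<le> enn2real (Kint Y a s x)" using that fin by (intro enn2real_mono) auto
    thus ?thesis using that unfolding I_def by simp
  qed
  have pt: "(t powr (- s) * Kfun Y a t x)\<^sup>2 / t = t powr (- 2 * s - 1) * (Kfun Y a t x)\<^sup>2" if "t > 0" for t
  proof -
    have "(t powr (- s))\<^sup>2 = t powr (- 2 * s)" using that by (simp add: powr_powr[symmetric] power2_eq_square powr_add[symmetric])
    moreover have "t powr (- 2 * s - 1) = t powr (- 2 * s) / t" using that by (simp add: powr_diff)
    ultimately show ?thesis by (simp add: power_mult_distrib)
  qed
  show ?thesis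
  proof (cases "s \<le> 1/2")
    case True
    have hi: "((\<lambda>t. K\<^sup>2 * t powr (- 2 * s - 1)) has_integral K\<^sup>2 * (- (\<tau> powr (- 2 * s - 1 + 1)) / (- 2 * s - 1 + 1))) {\<tau>..}"
      using s tau by (intro has_integral_mult_right has_integral_powr_to_inf) auto
    have eqI: "(\<integral>\<^sup>+ t. ennreal (K\<^sup>2 * t powr (- 2 * s - 1)) * indicator {\<tau>..} t \<partial>lborel)
        = ennreal (K\<^sup>2 * (- (\<tau> powr (- 2 * s - 1 + 1)) / (- 2 * s - 1 + 1)))"
      by (rule nn_integral_has_integral_lebesgue'[OF _ hi]) simp
    have monoI: "(\<integral>\<^sup>+ t. ennreal (K\<^sup>2 * t powr (- 2 * s - 1)) * indicator {\<tau>..} t \<partial>lborel) \<le> Kint Y a s x"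
      unfolding Kint_def
    proof (intro nn_integral_mono)
      fix t :: real
      show "ennreal (K\<^sup>2 * t powr (- 2 * s - 1)) * indicator {\<tau>..} t
         \<le> indicator {0<..} t * ennreal ((t powr (- s) * Kfun Y a t x)\<^sup>2 / t)"
      proof (cases "t \<ge> \<tau>")
        case True
        have "K \<le> Kfun Y a t x" unfolding K_def using tau True by (intro K_mono) auto
        hence "K\<^sup>2 \<le> (Kfun Y a t x)\<^sup>2" using K0 by (intro power_mono) auto
        hence "K\<^sup>2 * t powr (- 2 * s - 1) \<le> t powr (- 2 * s - 1) * (Kfun Y a t x)\<^sup>2"
          by (metis mult.commute mult_right_mono powr_ge_zero)
        thus ?thesis using True tau pt[of t] by (auto intro: ennreal_leI)
      qed simp
    qed
    have "ennreal (K\<^sup>2 * (- (\<tau> powr (- 2 * s - 1 + 1)) / (- 2 * s - 1 + 1))) \<le> Kint Y a s x"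
      using monoI eqI by simp
    hence "K\<^sup>2 * (- (\<tau> powr (- 2 * s - 1 + 1)) / (- 2 * s - 1 + 1)) \<le> I"
      by (rule fact1) (use s in \<open>simp add: divide_nonpos_neg\<close>)
    hence "K\<^sup>2 * \<tau> powr (- 2 * s) / (2 * s) \<le> I" by simp
    hence "K\<^sup>2 * \<tau> powr (- 2 * s) \<le> 2 * s * I" using s by (simp add: field_simps)
    hence "(1 - s) * (K\<^sup>2 * \<tau> powr (- 2 * s)) \<le> (1 - s) * (2 * s * I)" using s by (intro mult_left_mono) auto
    moreover have "(1/2) * (K\<^sup>2 * \<tau> powr (- 2 * s)) \<le> (1 - s) * (K\<^sup>2 * \<tau> powr (- 2 * s))"
      using True by (intro mult_right_mono) auto
    ultimately show ?thesis unfolding in2 K_def[symmetric] by (simp add: algebra_simps)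
  next
    case False
    have hi: "((\<lambda>t. K\<^sup>2 / \<tau>\<^sup>2 * t powr (1 - 2 * s)) has_integral K\<^sup>2 / \<tau>\<^sup>2 * (\<tau> powr (1 - 2 * s + 1) / (1 - 2 * s + 1))) {0..\<tau>}"
      using s tau by (intro has_integral_mult_right has_integral_powr_from_0) auto
    have eqI: "(\<integral>\<^sup>+ t. ennreal (K\<^sup>2 / \<tau>\<^sup>2 * t powr (1 - 2 * s)) * indicator {0..\<tau>} t \<partial>lborel)
        = ennreal (K\<^sup>2 / \<tau>\<^sup>2 * (\<tau> powr (1 - 2 * s + 1) / (1 - 2 * s + 1)))"
      by (rule nn_integral_has_integral_lebesgue'[OF _ hi]) simp
    have monoI: "(\<integral>\<^sup>+ t. ennreal (K\<^sup>2 / \<tau>\<^sup>2 * t powr (1 - 2 * s)) * indicator {0..\<tau>} t \<partial>lborel) \<le> Kint Y a s x"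
      unfolding Kint_def
    proof (intro nn_integral_mono)
      fix t :: real
      show "ennreal (K\<^sup>2 / \<tau>\<^sup>2 * t powr (1 - 2 * s)) * indicator {0..\<tau>} t
         \<le> indicator {0<..} t * ennreal ((t powr (- s) * Kfun Y a t x)\<^sup>2 / t)"
      proof (cases "0 < t \<and> t \<le> \<tau>")
        case True
        have "(t / \<tau>) * K \<le> Kfun Y a t x" unfolding K_def using True by (intro K_scale) auto
        hence "((t / \<tau>) * K)\<^sup>2 \<le> (Kfun Y a t x)\<^sup>2" using K0 True tau by (intro power_mono) auto
        hence le1: "t powr (- 2 * s - 1) * ((t / \<tau>) * K)\<^sup>2 \<le> t powr (- 2 * s - 1) * (Kfun Y a t x)\<^sup>2"
          by (intro mult_left_mono) auto
        have eq1: "t powr (- 2 * s - 1) * ((t / \<tau>) * K)\<^sup>2 = K\<^sup>2 / \<tau>\<^sup>2 * t powr (1 - 2 * s)"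
        proof -
          have "t powr (1 - 2 * s) = t powr (- 2 * s - 1 + 2)" by (simp add: algebra_simps)
          also have "\<dots> = t powr (- 2 * s - 1) * t powr 2" by (rule powr_add)
          also have "t powr 2 = t\<^sup>2" using True by (simp add: powr_numeral)
          finally have "t powr (1 - 2 * s) = t powr (- 2 * s - 1) * t\<^sup>2" .
          thus ?thesis by (simp add: power_mult_distrib power_divide)
        qed
        have "K\<^sup>2 / \<tau>\<^sup>2 * t powr (1 - 2 * s) \<le> (t powr (- s) * Kfun Y a t x)\<^sup>2 / t"
          using le1 eq1 pt[of t] True by linarith
        thus ?thesis using True by (simp add: ennreal_leI)
      next
        case F: False
        show ?thesis
        proof (cases "t = 0")
          case True thus ?thesis by simp
        qed (use F in auto)
      qed
    qed
    have "ennreal (K\<^sup>2 / \<tau>\<^sup>2 * (\<tau> powr (1 - 2 * s + 1) / (1 - 2 * s + 1))) \<le> Kint Y a s x"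
      using monoI eqI by simp
    hence "K\<^sup>2 / \<tau>\<^sup>2 * (\<tau> powr (1 - 2 * s + 1) / (1 - 2 * s + 1)) \<le> I"
      by (rule fact1) (use s tau in simp)
    moreover have "\<tau> powr (1 - 2 * s + 1) = \<tau>\<^sup>2 * \<tau> powr (- 2 * s)"
    proof -
      have "\<tau> powr (1 - 2 * s + 1) = \<tau> powr (2 + (- 2 * s))" by (simp add: algebra_simps)
      also have "\<dots> = \<tau> powr 2 * \<tau> powr (- 2 * s)" by (rule powr_add)
      also have "\<tau> powr 2 = \<tau>\<^sup>2" using tau by (simp add: powr_numeral)
      finally show ?thesis .
    qed
    ultimately have "K\<^sup>2 * \<tau> powr (- 2 * s) / (2 - 2 * s) \<le> I" using tau by simp
    hence "K\<^sup>2 * \<tau> powr (- 2 * s) \<le> 2 * (1 - s) * I" using s by (simp add: field_simps)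
    hence "s * (K\<^sup>2 * \<tau> powr (- 2 * s)) \<le> s * (2 * (1 - s) * I)" using s by (intro mult_left_mono) auto
    moreover have "(1/2) * (K\<^sup>2 * \<tau> powr (- 2 * s)) \<le> s * (K\<^sup>2 * \<tau> powr (- 2 * s))"
      using False by (intro mult_right_mono) auto
    ultimately show ?thesis unfolding in2 K_def[symmetric] by (simp add: algebra_simps)
  qed
qed

end

lemma quad_bound:
  fixes x A B :: real
  assumes "x \<ge> 0" "A \<ge> 0" "B \<ge> 0" "x\<^sup>2 \<le> A * x + B\<^sup>2"
  shows "x \<le> A + B"
proof (rule ccontr)
  assume "\<not> x \<le> A + B"
  hence h: "x > A + B" by simp
  have "x * x > (A + B) * x" using h assms by (intro mult_strict_right_mono) auto
  moreover have "B * x \<ge> B * B" using h assms by (intro mult_left_mono) auto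
  ultimately show False using assms(4) by (simp add: power2_eq_square algebra_simps)
qed

context
  fixes Y :: "'a::real_inner set" and a :: "'a \<Rightarrow> 'a \<Rightarrow> real"
  assumes sub: "subspace Y"
    and asym0: "\<forall>x\<in>Y. \<forall>y\<in>Y. a x y = a y x"
    and alin0: "\<forall>x\<in>Y. \<forall>y\<in>Y. \<forall>z\<in>Y. \<forall>r::real. a (r *\<^sub>R x + y) z = r * a x z + a y z"
    and apos0: "\<forall>y\<in>Y. a y y \<ge> 0"
begin

lemma asym: "x \<in> Y \<Longrightarrow> y \<in> Y \<Longrightarrow> a x y = a y x" using asym0 by blast
lemma alin: "x \<in> Y \<Longrightarrow> y \<in> Y \<Longrightarrow> z \<in> Y \<Longrightarrow> a (r *\<^sub>R x + y) z = r * a x z + a y z" using alin0 by blast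
lemma apos': "y \<in> Y \<Longrightarrow> a y y \<ge> 0" using apos0 by blast

lemma a_add: "x \<in> Y \<Longrightarrow> y \<in> Y \<Longrightarrow> z \<in> Y \<Longrightarrow> a (x + y) z = a x z + a y z"
  using alin[of x y z 1] by simp

lemma a_diff: "x \<in> Y \<Longrightarrow> y \<in> Y \<Longrightarrow> z \<in> Y \<Longrightarrow> a (x - y) z = a x z - a y z"
  using alin[of y x z "-1"] by simp

lemma a_add_r: "x \<in> Y \<Longrightarrow> y \<in> Y \<Longrightarrow> z \<in> Y \<Longrightarrow> a z (x + y) = a z x + a z y"
  using a_add[of x y z] asym subspace_add[OF sub] by metis

lemma a_diff_r: "x \<in> Y \<Longrightarrow> y \<in> Y \<Longrightarrow> z \<in> Y \<Longrightarrow> a z (x - y) = a z x - a z y"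
  using a_diff[of x y z] asym subspace_diff[OF sub] by metis

lemma a_sq_add: "x \<in> Y \<Longrightarrow> d \<in> Y \<Longrightarrow> a (x + d) (x + d) = a x x + 2 * a x d + a d d"
  using a_add a_add_r asym subspace_add[OF sub] by (simp add: a_add a_add_r asym)

lemma a_sq_diff: "x \<in> Y \<Longrightarrow> d \<in> Y \<Longrightarrow> a (x - d) (x - d) = a x x - 2 * a x d + a d d"
  using subspace_diff[OF sub] by (simp add: a_diff a_diff_r asym)

lemma a_cs: "x \<in> Y \<Longrightarrow> d \<in> Y \<Longrightarrow> 2 * a x d \<le> a x x + a d d"
  using a_sq_diff[of x d] apos'[of "x - d"] subspace_diff[OF sub] by simp

lemma normD_sq: "x \<in> Y \<Longrightarrow> (normD a x)\<^sup>2 = a x x"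
  unfolding normD_def using apos' by simp

lemma energy:
  assumes Yh: "subspace Yh" "Yh \<subseteq> Y" and G: "galerkin_sol a Yh \<rho> ybar y" and rho: "\<rho> \<ge> 0"
    and z: "z \<in> Yh"
  shows "(norm (y - ybar))\<^sup>2 \<le> (norm (z - ybar))\<^sup>2 + \<rho> * a z z"
proof -
  have y: "y \<in> Yh" and g: "\<And>v. v \<in> Yh \<Longrightarrow> inner y v + \<rho> * a y v = inner ybar v"
    using G unfolding galerkin_sol_def by auto
  define d where "d = z - y"
  have d: "d \<in> Yh" unfolding d_def using Yh z y by (simp add: subspace_diff)
  have yY: "y \<in> Y" and dY: "d \<in> Y" using y d Yh by auto
  have gd: "inner y d + \<rho> * a y d = inner ybar d" using g d by simp
  have zz: "z = y + d" unfolding d_def by simp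
  have "(norm (z - ybar))\<^sup>2 = (norm ((y - ybar) + d))\<^sup>2" unfolding zz by (simp add: algebra_simps)
  also have "\<dots> = (norm (y - ybar))\<^sup>2 + 2 * inner (y - ybar) d + (norm d)\<^sup>2"
    by (simp add: power2_norm_eq_inner inner_add_left inner_add_right inner_commute)
  finally have n1: "(norm (z - ybar))\<^sup>2 = (norm (y - ybar))\<^sup>2 + 2 * (inner y d - inner ybar d) + (norm d)\<^sup>2"
    by (simp add: inner_diff_left)
  have a1: "a z z = a y y + 2 * a y d + a d d" unfolding zz using a_sq_add yY dY by simp
  have "(norm (z - ybar))\<^sup>2 + \<rho> * a z z = (norm (y - ybar))\<^sup>2 + (norm d)\<^sup>2 + \<rho> * a y y + \<rho> * a d d"
    unfolding n1 a1 using gd by (simp add: algebra_simps)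
  moreover have "\<rho> * a y y \<ge> 0" "\<rho> * a d d \<ge> 0" using rho apos' yY dY by auto
  ultimately show ?thesis by (smt (verit) zero_le_power2)
qed

lemma dual_est:
  assumes Yh: "subspace Yh" "Yh \<subseteq> Y" and G: "galerkin_sol a Yh \<rho> ybar y" and rho: "\<rho> \<ge> 0"
    and z: "z \<in> Yh" and D: "D_rep Y a ybar w"
  shows "(norm (y - z))\<^sup>2 \<le> (norm (ybar - z) + \<rho> * norm w) * norm (y - z) + \<rho> / 2 * a (ybar - z) (ybar - z)"
proof -
  have y: "y \<in> Yh" and g: "\<And>v. v \<in> Yh \<Longrightarrow> inner y v + \<rho> * a y v = inner ybar v"
    using G unfolding galerkin_sol_def by auto
  have yb: "ybar \<in> Y" and wr: "\<And>v. v \<in> Y \<Longrightarrow> a ybar v = inner w v" using D unfolding D_rep_def by auto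
  define d where "d = y - z"
  define \<eta> where "\<eta> = ybar - z"
  have d: "d \<in> Yh" unfolding d_def using Yh z y by (simp add: subspace_diff)
  have dY: "d \<in> Y" and zY: "z \<in> Y" using d z Yh by auto
  have eY: "\<eta> \<in> Y" unfolding \<eta>_def using yb zY sub by (simp add: subspace_diff)
  have gd: "inner y d + \<rho> * a y d = inner ybar d" using g d by simp
  have "y = d + z" unfolding d_def by simp
  hence "a y d = a d d + a z d" using a_add dY zY by simp
  also have "z = ybar - \<eta>" unfolding \<eta>_def by simp
  hence "a z d = a ybar d - a \<eta> d" using a_diff yb eY dY by simp
  finally have ayd: "a y d = a d d + inner w d - a \<eta> d" using wr dY by simp
  have "inner y d - inner ybar d = inner (y - ybar) d" by (simp add: inner_diff_left)
  also have "y - ybar = d - \<eta>" unfolding d_def \<eta>_def by simp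
  finally have "inner y d - inner ybar d = (norm d)\<^sup>2 - inner \<eta> d"
    by (simp add: inner_diff_left power2_norm_eq_inner)
  with gd ayd have eq: "(norm d)\<^sup>2 = inner \<eta> d - \<rho> * inner w d - \<rho> * a d d + \<rho> * a \<eta> d"
    by (simp add: algebra_simps)
  have "inner \<eta> d \<le> norm \<eta> * norm d" by (rule norm_cauchy_schwarz)
  moreover have "- inner w d \<le> norm w * norm d"
    using norm_cauchy_schwarz[of "-w" d] by simp
  hence "\<rho> * (- inner w d) \<le> \<rho> * (norm w * norm d)" using rho by (intro mult_left_mono)
  moreover have "\<rho> * (2 * a \<eta> d) \<le> \<rho> * (a \<eta> \<eta> + a d d)" using a_cs[OF eY dY] rho by (intro mult_left_mono)
  moreover have "\<rho> * a d d \<ge> 0" using rho apos' dY by simp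
  ultimately have "(norm d)\<^sup>2 \<le> (norm \<eta> + \<rho> * norm w) * norm d + \<rho> / 2 * a \<eta> \<eta>"
    unfolding eq by (simp add: algebra_simps)
  thus ?thesis unfolding d_def \<eta>_def .
qed

end

theorem mainTheorem4:
  fixes Y :: "'a::{real_inner,complete_space} set"
    and iY a :: "'a \<Rightarrow> 'a \<Rightarrow> real"
    and h0 \<alpha> :: real and Yh :: "real \<Rightarrow> 'a set" and P :: "real \<Rightarrow> 'a \<Rightarrow> 'a"
  assumes "gelfand_setting Y iY a"
    and "discretization Y a h0 Yh P \<alpha>"
  shows "\<exists>c>0. \<forall>h\<in>{0<..h0}. \<forall>ybar y.
           galerkin_sol a (Yh h) (h powr (2 * \<alpha>)) ybar y \<longrightarrow>
             norm (y - ybar) \<le> c * norm ybar \<and>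
             (ybar \<in> Y \<longrightarrow> norm (y - ybar) \<le> c * h powr \<alpha> * normD a ybar) \<and>
             (\<forall>w. D_rep Y a ybar w \<longrightarrow> norm (y - ybar) \<le> c * h powr (2 * \<alpha>) * norm w) \<and>
             (\<forall>s\<in>{0..1}. ybar \<in> interp_space Y a s \<longrightarrow>
                norm (y - ybar) \<le> c * h powr (\<alpha> * s) * interp_norm Y a s ybar)"
proof -
  have sub: "subspace Y" and asym0: "\<forall>x\<in>Y. \<forall>y\<in>Y. a x y = a y x"
    and alin0: "\<forall>x\<in>Y. \<forall>y\<in>Y. \<forall>z\<in>Y. \<forall>r::real. a (r *\<^sub>R x + y) z = r * a x z + a y z"
    using assms(1) unfolding gelfand_setting_def by auto
  have asym: "\<And>x y. x \<in> Y \<Longrightarrow> y \<in> Y \<Longrightarrow> a x y = a y x"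
    and alin: "\<And>x y z r. x \<in> Y \<Longrightarrow> y \<in> Y \<Longrightarrow> z \<in> Y \<Longrightarrow> a (r *\<^sub>R x + y) z = r * a x z + a y z"
    and ipos: "\<And>x. x \<in> Y \<Longrightarrow> x \<noteq> 0 \<Longrightarrow> iY x x > 0"
    using assms(1) unfolding gelfand_setting_def by auto
  obtain m where m: "m > 0" "\<And>y. y \<in> Y \<Longrightarrow> a y y \<ge> m * iY y y"
    using assms(1) unfolding gelfand_setting_def by auto
  have zY: "0 \<in> Y" using sub by (simp add: subspace_0)
  have a00: "a 0 0 = 0" using alin[of 0 0 0 1] zY by simp
  have apos: "a y y \<ge> 0" if "y \<in> Y" for y
  proof (cases "y = 0")
    case True thus ?thesis using a00 by simp
  next
    case False
    hence "m * iY y y > 0" using ipos that m by simp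
    thus ?thesis using m that by (meson less_eq_real_def order_trans)
  qed
  have apos0: "\<forall>y\<in>Y. a y y \<ge> 0" using apos by blast
  have nD0: "normD a 0 = 0" unfolding normD_def using a00 by simp
  have nDpos: "normD a y \<ge> 0" if "y \<in> Y" for y unfolding normD_def using apos that by simp
  have al: "\<alpha> > 0" and Yhp: "\<And>h. h \<in> {0<..h0} \<Longrightarrow> subspace (Yh h) \<and> Yh h \<subseteq> Y \<and> (\<forall>y\<in>Y. P h y \<in> Yh h)"
    using assms(2) unfolding discretization_def by auto
  obtain c1 c2 c3 c4 where cpos: "c1 > 0" "c2 > 0" "c3 > 0" "c4 > 0" and
    cP: "\<And>h y. h \<in> {0<..h0} \<Longrightarrow> y \<in> Y \<Longrightarrow>
        norm (y - P h y) \<le> c1 * h powr \<alpha> * normD a y \<and>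
        normD a (y - P h y) \<le> c2 * normD a y \<and>
        (\<forall>w. D_rep Y a y w \<longrightarrow>
           norm (y - P h y) \<le> c3 * h powr (2 * \<alpha>) * norm w \<and>
           normD a (y - P h y) \<le> c4 * h powr \<alpha> * norm w)"
    using assms(2) unfolding discretization_def by metis
  define C2 where "C2 = c1 + 2 + 2 * c2"
  define C3 where "C3 = 2 * c3 + 1 + c4"
  define c where "c = 2 * (1 + C2) + C3"
  have C2p: "C2 > 0" and C3p: "C3 > 0" using cpos unfolding C2_def C3_def by auto
  have cge: "c \<ge> 1" "c \<ge> C2" "c \<ge> C3" "c \<ge> 2 * (1 + C2)" using C2p C3p unfolding c_def by auto
  note lem = energy[of Y a, OF sub asym0 alin0 apos0] dual_est[of Y a, OF sub asym0 alin0 apos0] a_sq_diff[of Y a, OF sub asym0 alin0 apos0]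
    a_cs[of Y a, OF sub asym0 alin0 apos0] normD_sq[of Y a, OF sub asym0 alin0 apos0]
    a_sq_add[of Y a, OF sub asym0 alin0 apos0]
  show ?thesis
  proof (intro exI[of _ c] conjI ballI allI impI)
    show "c > 0" using cge by simp
  next
    fix h ybar y
    assume h: "h \<in> {0<..h0}" and G: "galerkin_sol a (Yh h) (h powr (2 * \<alpha>)) ybar y"
    define t where "t = h powr \<alpha>"
    define \<rho> where "\<rho> = h powr (2 * \<alpha>)"
    have hp: "h > 0" using h by simp
    have tp: "t > 0" unfolding t_def using hp by simp
    have rho: "\<rho> = t\<^sup>2" unfolding \<rho>_def t_def using hp
      by (simp add: power2_eq_square powr_add[symmetric])
    have rp: "\<rho> \<ge> 0" unfolding rho by simp
    have sh: "subspace (Yh h)" "Yh h \<subseteq> Y" "\<And>y. y \<in> Y \<Longrightarrow> P h y \<in> Yh h" using Yhp[OF h] by auto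
    have yY: "y \<in> Y" using G sh unfolding galerkin_sol_def by auto
    have dec: "norm (y - ybar) \<le> norm y0 + C2 * t * normD a y1" if y1: "y1 \<in> Y" and yd: "ybar = y0 + y1" for y0 y1
    proof -
      define z where "z = P h y1"
      define \<eta> where "\<eta> = y1 - z"
      have zYh: "z \<in> Yh h" unfolding z_def using sh y1 by simp
      have zY: "z \<in> Y" using zYh sh by auto
      have eY: "\<eta> \<in> Y" unfolding \<eta>_def using y1 zY sub by (simp add: subspace_diff)
      define N where "N = normD a y1"
      have N0: "N \<ge> 0" unfolding N_def using nDpos y1 by simp
      have cp: "norm \<eta> \<le> c1 * t * N" "normD a \<eta> \<le> c2 * N"
        using cP[OF h y1] unfolding \<eta>_def z_def t_def N_def by auto
      have E: "(norm (y - ybar))\<^sup>2 \<le> (norm (z - ybar))\<^sup>2 + \<rho> * a z z"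
        using lem(1)[OF sh(1,2) G[folded \<rho>_def] rp zYh] .
      have "z - ybar = - (\<eta> + y0)" unfolding \<eta>_def yd by (simp add: algebra_simps)
      hence "norm (z - ybar) = norm (\<eta> + y0)" by (simp only: norm_minus_cancel)
      also have "\<dots> \<le> norm y0 + c1 * t * N" using norm_triangle_ineq[of \<eta> y0] cp by simp
      finally have n1: "norm (z - ybar) \<le> norm y0 + c1 * t * N" .
      have "z = y1 - \<eta>" unfolding \<eta>_def by simp
      hence "a z z = a y1 y1 - 2 * a y1 \<eta> + a \<eta> \<eta>" using lem(3)[OF y1 eY] by simp
      moreover have "- (2 * a y1 \<eta>) \<le> a y1 y1 + a \<eta> \<eta>"
        using lem(6)[OF y1 eY] apos[OF subspace_add[OF sub y1 eY]] by linarith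
      ultimately have "a z z \<le> 2 * N\<^sup>2 + 2 * (normD a \<eta>)\<^sup>2" using lem(5)[OF y1] lem(5)[OF eY] unfolding N_def by simp
      also have "(normD a \<eta>)\<^sup>2 \<le> (c2 * N)\<^sup>2" using cp nDpos[OF eY] by (intro power_mono) auto
      finally have "a z z \<le> 2 * N\<^sup>2 + 2 * (c2 * N)\<^sup>2" by simp
      also have "\<dots> \<le> ((2 + 2 * c2) * N)\<^sup>2"
      proof -
        have e: "((2 + 2 * c2) * N)\<^sup>2 = (2 * N\<^sup>2 + 2 * (c2 * N)\<^sup>2) + (2 * N\<^sup>2 + 8 * c2 * N\<^sup>2 + 2 * (c2 * N)\<^sup>2)"
          by (simp add: power2_eq_square algebra_simps)
        have "0 \<le> 2 * N\<^sup>2 + 8 * c2 * N\<^sup>2 + 2 * (c2 * N)\<^sup>2" using cpos by simp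
        thus ?thesis unfolding e by linarith
      qed
      finally have "\<rho> * a z z \<le> t\<^sup>2 * ((2 + 2 * c2) * N)\<^sup>2" unfolding rho by (simp add: mult_left_mono)
      hence r2: "\<rho> * a z z \<le> ((2 + 2 * c2) * t * N)\<^sup>2" by (simp add: power_mult_distrib mult_ac)
      have "(norm (z - ybar))\<^sup>2 \<le> (norm y0 + c1 * t * N)\<^sup>2" using n1 by (intro power_mono) auto
      with E r2 have "(norm (y - ybar))\<^sup>2 \<le> (norm y0 + c1 * t * N)\<^sup>2 + ((2 + 2 * c2) * t * N)\<^sup>2" by simp
      also have "\<dots> \<le> (norm y0 + c1 * t * N + (2 + 2 * c2) * t * N)\<^sup>2"
      proof -
        have "0 \<le> (norm y0 + c1 * t * N) * ((2 + 2 * c2) * t * N)" using cpos tp N0 by simp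
        thus ?thesis unfolding power2_sum by linarith
      qed
      finally have "norm (y - ybar) \<le> norm y0 + c1 * t * N + (2 + 2 * c2) * t * N"
        by (rule power2_le_imp_le) (use cpos tp N0 in auto)
      thus ?thesis unfolding C2_def N_def by (simp add: algebra_simps)
    qed
    show c1: "norm (y - ybar) \<le> c * norm ybar"
      using dec[OF zY, of ybar] nD0 cge mult_right_mono[OF cge(1), of "norm ybar"] by simp
    show c2: "norm (y - ybar) \<le> c * h powr \<alpha> * normD a ybar" if "ybar \<in> Y"
    proof -
      have "norm (y - ybar) \<le> C2 * t * normD a ybar" using dec[OF that, of 0] by simp
      also have "\<dots> \<le> c * t * normD a ybar" using cge tp nDpos[OF that] by (intro mult_right_mono) auto
      finally show ?thesis unfolding t_def .
    qed
    show "norm (y - ybar) \<le> c * h powr (2 * \<alpha>) * norm w" if D: "D_rep Y a ybar w" for w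
    proof -
      have ybY: "ybar \<in> Y" using D unfolding D_rep_def by simp
      define z where "z = P h ybar"
      have zYh: "z \<in> Yh h" unfolding z_def using sh ybY by simp
      have zY: "z \<in> Y" using zYh sh by auto
      have eY: "ybar - z \<in> Y" using ybY zY sub by (simp add: subspace_diff)
      have cp: "norm (ybar - z) \<le> c3 * \<rho> * norm w" "normD a (ybar - z) \<le> c4 * t * norm w"
        using cP[OF h ybY] D unfolding z_def t_def \<rho>_def by auto
      have de: "(norm (y - z))\<^sup>2 \<le> (norm (ybar - z) + \<rho> * norm w) * norm (y - z) + \<rho> / 2 * a (ybar - z) (ybar - z)"
        using lem(2)[OF sh(1,2) G[folded \<rho>_def] rp zYh D] .
      have A: "(norm (ybar - z) + \<rho> * norm w) * norm (y - z) \<le> ((c3 + 1) * \<rho> * norm w) * norm (y - z)"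
        using cp by (intro mult_right_mono) (auto simp: algebra_simps)
      have "a (ybar - z) (ybar - z) = (normD a (ybar - z))\<^sup>2" using lem(5)[OF eY] by simp
      also have "\<dots> \<le> (c4 * t * norm w)\<^sup>2" using cp nDpos[OF eY] by (intro power_mono) auto
      finally have "\<rho> / 2 * a (ybar - z) (ybar - z) \<le> \<rho> / 2 * (c4 * t * norm w)\<^sup>2" using rp by (intro mult_left_mono) auto
      also have "\<dots> \<le> \<rho> * (c4 * t * norm w)\<^sup>2" using rp by simp
      also have "\<dots> = (c4 * \<rho> * norm w)\<^sup>2" unfolding rho by (simp add: power_mult_distrib power2_eq_square)
      finally have B: "\<rho> / 2 * a (ybar - z) (ybar - z) \<le> (c4 * \<rho> * norm w)\<^sup>2" .
      have "norm (y - z) \<le> (c3 + 1) * \<rho> * norm w + c4 * \<rho> * norm w"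
      proof (rule quad_bound)
        show "(norm (y - z))\<^sup>2 \<le> ((c3 + 1) * \<rho> * norm w) * norm (y - z) + (c4 * \<rho> * norm w)\<^sup>2"
          using de A B by linarith
      qed (use cpos rp in auto)
      moreover have "norm (y - ybar) \<le> norm (y - z) + norm (ybar - z)"
        using norm_triangle_ineq[of "y - z" "z - ybar"] by (simp add: norm_minus_commute)
      ultimately have "norm (y - ybar) \<le> C3 * \<rho> * norm w" using cp unfolding C3_def by (simp add: algebra_simps)
      also have "\<dots> \<le> c * \<rho> * norm w" using cge rp by (intro mult_right_mono) auto
      finally show ?thesis unfolding \<rho>_def .
    qed
    show "norm (y - ybar) \<le> c * h powr (\<alpha> * s) * interp_norm Y a s ybar"
      if s: "s \<in> {0..1}" and yi: "ybar \<in> interp_space Y a s" for s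
    proof -
      consider "s = 0" | "s = 1" | "0 < s \<and> s < 1" using s by fastforce
      thus ?thesis
      proof cases
        case 1 thus ?thesis using c1 hp by (simp add: interp_norm_def)
      next
        case 2 thus ?thesis using c2 yi by (simp add: interp_norm_def interp_space_def)
      next
        case 3
        have fin: "Kint Y a s ybar < \<infinity>" using yi 3 by (simp add: interp_space_def)
        have "norm (y - ybar) / (1 + C2) \<le> Kfun Y a t ybar"
          unfolding Kfun_def
        proof (rule cInf_greatest)
          show "{norm y0 + t * normD a y1 | y0 y1. y1 \<in> Y \<and> ybar = y0 + y1} \<noteq> {}" using zY by force
        next
          fix x assume "x \<in> {norm y0 + t * normD a y1 | y0 y1. y1 \<in> Y \<and> ybar = y0 + y1}"
          then obtain y0 y1 where x: "x = norm y0 + t * normD a y1" "y1 \<in> Y" "ybar = y0 + y1" by auto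
          have "norm (y - ybar) \<le> norm y0 + C2 * t * normD a y1" using dec x by simp
          also have "\<dots> \<le> (1 + C2) * x" unfolding x using C2p tp nDpos[OF x(2)]
            by (simp add: algebra_simps mult_nonneg_nonneg)
          finally show "norm (y - ybar) / (1 + C2) \<le> x" using C2p by (simp add: field_simps)
        qed
        hence e1: "norm (y - ybar) \<le> (1 + C2) * Kfun Y a t ybar" using C2p by (simp add: field_simps)
        define IN where "IN = interp_norm Y a s ybar"
        have IN0: "IN \<ge> 0" unfolding IN_def interp_norm_def using 3 by simp
        have KL: "(Kfun Y a t ybar)\<^sup>2 * t powr (- 2 * s) \<le> 2 * IN\<^sup>2"
          unfolding IN_def using Kint_lower[of Y a, OF zY apos 3[THEN conjunct1] 3[THEN conjunct2] tp fin] by simp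
        have K0: "Kfun Y a t ybar \<ge> 0" using K_nonneg[of Y a, OF zY apos] tp by simp
        have ts: "t powr (- 2 * s) * (t powr s)\<^sup>2 = 1" using tp
          by (simp add: power2_eq_square powr_add[symmetric])
        have "(Kfun Y a t ybar)\<^sup>2 = (Kfun Y a t ybar)\<^sup>2 * t powr (- 2 * s) * (t powr s)\<^sup>2"
          using ts by (simp add: mult.assoc)
        also have "\<dots> \<le> 2 * IN\<^sup>2 * (t powr s)\<^sup>2" using KL by (intro mult_right_mono) auto
        also have "\<dots> \<le> (2 * IN * t powr s)\<^sup>2" by (simp add: power_mult_distrib)
        finally have "Kfun Y a t ybar \<le> 2 * IN * t powr s"
          by (rule power2_le_imp_le) (use IN0 tp in auto)
        hence "norm (y - ybar) \<le> (1 + C2) * (2 * IN * t powr s)"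
          using e1 C2p by (smt (verit) mult_left_mono)
        also have "\<dots> = (2 * (1 + C2)) * t powr s * IN" by (simp add: algebra_simps)
        also have "\<dots> \<le> c * t powr s * IN" using cge IN0 tp by (intro mult_right_mono) auto
        also have "t powr s = h powr (\<alpha> * s)" unfolding t_def by (simp add: powr_powr)
        finally show ?thesis unfolding IN_def .
      qed
    qed
  qed
qed

end
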